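(* Let $G$ be a graph with edge set $E$, $k\ge1$, suppose $M_k(G)$ is a connected matroid, let $B$ be a base of $M_k(G)$ and $e\in B$, and let $A$ be the component of $G\langle B\rangle$ containing $e$. Suppose $e\notin E(\lfloor A\rfloor)$. Then exactly one of the two components of $A\setminus e$ is a tree, say $T$, and the fundamental cocircuit $K(e,B)$ equals $\{e\}\cup\{u\in E\setminus B: u \text{ has at least one end-vertex in } V(T)\}$.
   Context: Graphs are finite, may have loops and parallel edges, and have no isolated vertices; $A\setminus e$ deletes the edge $e$ and keeps all vertices (a single vertex is a tree). A leaf is a vertex incident to exactly one edge, which is not a loop. $\Delta H=|E(H)|-|V(H)|$. For $X\subseteq E$, $G\langle X\rangle$ is the subgraph with edge set $X$ and vertex set the vertices incident to $X$. For $k\ge0$, $M_k(G)$ is the matroid on $E$ whose circuits are the inclusion-minimal members of $\{C\subseteq E:C\neq\emptyset,\ |C|=|V(G\langle C\rangle)|+k\}$. A matroid is connected if its ground set has at least two elements and every two elements lie in a common circuit. For a base $B$ and $e\in B$, $K(e,B)$ is the unique cocircuit $K$ of the matroid with $K\cap B=\{e\}$. For a connected graph $A$ containing a cycle, its kernel $\lfloor A\rfloor$ is the subgraph obtained by repeatedly deleting leaves (with their incident edges) until no leaf remains (the components of $G\langle B\rangle$ each contain a cycle here). *)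

theory Defs
  imports Main
begin

text \<open>A graph is given by a finite edge set E and an incidence map ends, where
  ends f is the set of end-vertices of f (one vertex for a loop, two otherwise).
  Vertices are exactly those incident to edges (no isolated vertices).\<close>

definition is_graph :: "('e \<Rightarrow> 'v set) \<Rightarrow> 'e set \<Rightarrow> bool" where
  "is_graph ends E \<longleftrightarrow> finite E \<and> (\<forall>f\<in>E. card (ends f) = 1 \<or> card (ends f) = 2)"

definition verts :: "('e \<Rightarrow> 'v set) \<Rightarrow> 'e set \<Rightarrow> 'v set" where
  "verts ends X = \<Union> (ends ` X)"

definition Mk_circuit :: "('e \<Rightarrow> 'v set) \<Rightarrow> 'e set \<Rightarrow> nat \<Rightarrow> 'e set \<Rightarrow> bool" where
  "Mk_circuit ends E k C \<longleftrightarrow>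
     C \<subseteq> E \<and> C \<noteq> {} \<and> card C = card (verts ends C) + k \<and>
     (\<forall>D. D \<subseteq> C \<and> D \<noteq> {} \<and> card D = card (verts ends D) + k \<longrightarrow> D = C)"

text \<open>M_k(G) is a matroid: its circuit family satisfies the circuit axioms
  (non-emptiness and incomparability hold by definition; circuit elimination).\<close>
definition Mk_is_matroid :: "('e \<Rightarrow> 'v set) \<Rightarrow> 'e set \<Rightarrow> nat \<Rightarrow> bool" where
  "Mk_is_matroid ends E k \<longleftrightarrow>
     (\<forall>C1 C2 x. Mk_circuit ends E k C1 \<and> Mk_circuit ends E k C2 \<and> C1 \<noteq> C2 \<and> x \<in> C1 \<inter> C2 \<longrightarrow>
        (\<exists>C3. Mk_circuit ends E k C3 \<and> C3 \<subseteq> (C1 \<union> C2) - {x}))"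

definition Mk_connected :: "('e \<Rightarrow> 'v set) \<Rightarrow> 'e set \<Rightarrow> nat \<Rightarrow> bool" where
  "Mk_connected ends E k \<longleftrightarrow> 2 \<le> card E \<and>
     (\<forall>x\<in>E. \<forall>y\<in>E. \<exists>C. Mk_circuit ends E k C \<and> x \<in> C \<and> y \<in> C)"

definition Mk_indep :: "('e \<Rightarrow> 'v set) \<Rightarrow> 'e set \<Rightarrow> nat \<Rightarrow> 'e set \<Rightarrow> bool" where
  "Mk_indep ends E k I \<longleftrightarrow> I \<subseteq> E \<and> \<not> (\<exists>C. Mk_circuit ends E k C \<and> C \<subseteq> I)"

definition Mk_base :: "('e \<Rightarrow> 'v set) \<Rightarrow> 'e set \<Rightarrow> nat \<Rightarrow> 'e set \<Rightarrow> bool" where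
  "Mk_base ends E k B \<longleftrightarrow> Mk_indep ends E k B \<and>
     (\<forall>I. Mk_indep ends E k I \<and> B \<subseteq> I \<longrightarrow> I = B)"

definition Mk_cocircuit :: "('e \<Rightarrow> 'v set) \<Rightarrow> 'e set \<Rightarrow> nat \<Rightarrow> 'e set \<Rightarrow> bool" where
  "Mk_cocircuit ends E k K \<longleftrightarrow> K \<subseteq> E \<and> K \<noteq> {} \<and>
     (\<forall>B. Mk_base ends E k B \<longrightarrow> K \<inter> B \<noteq> {}) \<and>
     (\<forall>K'. K' \<subseteq> K \<and> K' \<noteq> {} \<and> (\<forall>B. Mk_base ends E k B \<longrightarrow> K' \<inter> B \<noteq> {}) \<longrightarrow> K' = K)"

definition fund_cocircuit :: "('e \<Rightarrow> 'v set) \<Rightarrow> 'e set \<Rightarrow> nat \<Rightarrow> 'e \<Rightarrow> 'e set \<Rightarrow> 'e set" where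
  "fund_cocircuit ends E k e B = (THE K. Mk_cocircuit ends E k K \<and> K \<inter> B = {e})"

definition adj :: "('e \<Rightarrow> 'v set) \<Rightarrow> 'e set \<Rightarrow> ('v \<times> 'v) set" where
  "adj ends F = {(u, v). \<exists>f\<in>F. u \<in> ends f \<and> v \<in> ends f}"

text \<open>Vertex sets of the connected components of the graph with vertex set V and edge set F
  (ends of edges in F assumed inside V).\<close>
definition components :: "('e \<Rightarrow> 'v set) \<Rightarrow> 'v set \<Rightarrow> 'e set \<Rightarrow> 'v set set" where
  "components ends V F = V // ((adj ends F)\<^sup>* \<inter> (V \<times> V))"

definition edges_in :: "('e \<Rightarrow> 'v set) \<Rightarrow> 'e set \<Rightarrow> 'v set \<Rightarrow> 'e set" where
  "edges_in ends F C = {f\<in>F. ends f \<subseteq> C}"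

definition connected_graph :: "('e \<Rightarrow> 'v set) \<Rightarrow> 'v set \<Rightarrow> 'e set \<Rightarrow> bool" where
  "connected_graph ends V F \<longleftrightarrow> V \<noteq> {} \<and> (\<forall>u\<in>V. \<forall>v\<in>V. (u, v) \<in> (adj ends F)\<^sup>*)"

text \<open>A tree is a minimally connected graph (connected, every edge is a bridge);
  a single vertex is a tree, and loops/parallel edges are excluded.\<close>
definition is_tree :: "('e \<Rightarrow> 'v set) \<Rightarrow> 'v set \<Rightarrow> 'e set \<Rightarrow> bool" where
  "is_tree ends V F \<longleftrightarrow> connected_graph ends V F \<and>
     (\<forall>f\<in>F. \<not> connected_graph ends V (F - {f}))"

definition edge_component :: "('e \<Rightarrow> 'v set) \<Rightarrow> 'e set \<Rightarrow> 'e \<Rightarrow> 'e set" where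
  "edge_component ends X e =
     {f\<in>X. \<exists>u\<in>ends e. \<exists>v\<in>ends f. (u, v) \<in> (adj ends X)\<^sup>*}"

definition leaf_edge :: "('e \<Rightarrow> 'v set) \<Rightarrow> 'e set \<Rightarrow> 'v \<Rightarrow> 'e \<Rightarrow> bool" where
  "leaf_edge ends F v f \<longleftrightarrow> f \<in> F \<and> v \<in> ends f \<and> card (ends f) = 2 \<and>
     (\<forall>g\<in>F. v \<in> ends g \<longrightarrow> g = f)"

definition leaf_del :: "('e \<Rightarrow> 'v set) \<Rightarrow> ('e set \<times> 'e set) set" where
  "leaf_del ends = {(F, F - {f}) | F f. \<exists>v. leaf_edge ends F v f}"

definition kernel_edges :: "('e \<Rightarrow> 'v set) \<Rightarrow> 'e set \<Rightarrow> 'e set" where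
  "kernel_edges ends A =
     (THE K. (A, K) \<in> (leaf_del ends)\<^sup>* \<and> \<not> (\<exists>v f. leaf_edge ends K v f))"

end

theory Submission
  imports Defs
begin


lemma adj_in: "f \<in> F \<Longrightarrow> a \<in> ends f \<Longrightarrow> b \<in> ends f \<Longrightarrow> (a,b) \<in> adj ends F"
  by (auto simp: adj_def)

lemma adj_sym: "(x,y) \<in> adj ends F \<Longrightarrow> (y,x) \<in> adj ends F"
  by (auto simp: adj_def)

lemma adj_mono: "F \<subseteq> G \<Longrightarrow> adj ends F \<subseteq> adj ends G"
  by (auto simp: adj_def)

lemma rtr_mono: "F \<subseteq> G \<Longrightarrow> (x,y) \<in> (adj ends F)\<^sup>* \<Longrightarrow> (x,y) \<in> (adj ends G)\<^sup>*"
  using rtrancl_mono[OF adj_mono] by blast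

lemma rtr_sym: "(x,y) \<in> (adj ends F)\<^sup>* \<Longrightarrow> (y,x) \<in> (adj ends F)\<^sup>*"
proof (induction rule: rtrancl_induct)
  case base then show ?case by simp
next
  case (step y z)
  then show ?case using adj_sym converse_rtrancl_into_rtrancl by metis
qed

lemma rtr_verts: "(x,y) \<in> (adj ends F)\<^sup>* \<Longrightarrow> y = x \<or> y \<in> verts ends F"
proof (induction rule: rtrancl_induct)
  case base then show ?case by simp
next
  case (step y z)
  then show ?case by (auto simp: adj_def verts_def)
qed

lemma rtr_isol: "(x,y) \<in> (adj ends F)\<^sup>* \<Longrightarrow> x \<notin> verts ends F \<Longrightarrow> y = x"
proof (induction rule: rtrancl_induct)
  case base then show ?case by simp
next
  case (step y z)
  then show ?case by (auto simp: adj_def verts_def)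
qed

lemma bypass:
  assumes "\<forall>a\<in>ends f. \<forall>b\<in>ends f. (a,b) \<in> (adj ends (G - {f}))\<^sup>*"
  shows "(x,y) \<in> (adj ends G)\<^sup>* \<Longrightarrow> (x,y) \<in> (adj ends (G - {f}))\<^sup>*"
proof (induction rule: rtrancl_induct)
  case base then show ?case by simp
next
  case (step y z)
  then obtain g where g: "g \<in> G" "y \<in> ends g" "z \<in> ends g" by (auto simp: adj_def)
  show ?case
  proof (cases "g = f")
    case True
    then show ?thesis using assms g step.IH rtrancl_trans by metis
  next
    case False
    then have "(y,z) \<in> adj ends (G - {f})" using g by (auto simp: adj_def)
    then show ?thesis using step.IH by (meson rtrancl.rtrancl_into_rtrancl)
  qed
qed

lemma pend_reach:
  assumes "v \<notin> verts ends G'" "ends f = {v,w}" "v \<noteq> w"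
  shows "(x,y) \<in> (adj ends (insert f G'))\<^sup>* \<Longrightarrow> x \<noteq> v \<Longrightarrow>
     (x,y) \<in> (adj ends G')\<^sup>* \<or> (y = v \<and> (x,w) \<in> (adj ends G')\<^sup>*)"
proof (induction rule: rtrancl_induct)
  case base then show ?case by simp
next
  case (step y z)
  then obtain g where g: "g \<in> insert f G'" "y \<in> ends g" "z \<in> ends g" by (auto simp: adj_def)
  show ?case
  proof (cases "g = f")
    case True
    then have yz: "y \<in> {v,w}" "z \<in> {v,w}" using g assms by auto
    have nv: "(x,v) \<notin> (adj ends G')\<^sup>*" using rtr_verts[of x v ends G'] assms(1) step.prems by auto
    show ?thesis using step yz assms(3) nv by auto
  next
    case False
    then have gG: "g \<in> G'" using g by auto
    then have "v \<notin> ends g" using assms(1) by (auto simp: verts_def)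
    then have "y \<noteq> v" using g by auto
    then have "(x,y) \<in> (adj ends G')\<^sup>*" using step by auto
    moreover have "(y,z) \<in> adj ends G'" using gG g by (auto simp: adj_def)
    ultimately show ?thesis by (meson rtrancl.rtrancl_into_rtrancl)
  qed
qed

lemma tree_pend:
  assumes tr: "is_tree ends W ET" and v: "v \<notin> W" "v \<notin> verts ends ET" and w: "w \<in> W"
    and f: "ends f = {v,w}" "v \<noteq> w" "f \<notin> ET"
  shows "is_tree ends (insert v W) (insert f ET)"
proof -
  have conn: "connected_graph ends W ET" using tr by (simp add: is_tree_def)
  have c1: "connected_graph ends (insert v W) (insert f ET)"
    unfolding connected_graph_def
  proof (intro conjI ballI)
    show "insert v W \<noteq> {}" by simp
    fix x y assume x: "x \<in> insert v W" and y: "y \<in> insert v W"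
    have vw: "(v,w) \<in> (adj ends (insert f ET))\<^sup>*" "(w,v) \<in> (adj ends (insert f ET))\<^sup>*"
      using f by (auto intro!: r_into_rtrancl adj_in)
    have W: "\<And>a b. a \<in> W \<Longrightarrow> b \<in> W \<Longrightarrow> (a,b) \<in> (adj ends (insert f ET))\<^sup>*"
      using conn rtr_mono[of ET "insert f ET" _ _ ends] by (auto simp: connected_graph_def)
    show "(x,y) \<in> (adj ends (insert f ET))\<^sup>*" using x y vw W w
      by (metis insertE rtrancl_trans rtrancl.rtrancl_refl)
  qed
  have c2: "\<forall>g\<in>insert f ET. \<not> connected_graph ends (insert v W) (insert f ET - {g})"
  proof
    fix g assume g: "g \<in> insert f ET"
    show "\<not> connected_graph ends (insert v W) (insert f ET - {g})"
    proof
      assume c: "connected_graph ends (insert v W) (insert f ET - {g})"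
      show False
      proof (cases "g = f")
        case True
        then have "insert f ET - {g} = ET" using f by auto
        then have "(v,w) \<in> (adj ends ET)\<^sup>*" using c w by (auto simp: connected_graph_def)
        then show False using rtr_isol v f by metis
      next
        case False
        then have gE: "g \<in> ET" using g by auto
        have eq: "insert f ET - {g} = insert f (ET - {g})" using False by auto
        have "connected_graph ends W (ET - {g})"
          unfolding connected_graph_def
        proof (intro conjI ballI)
          show "W \<noteq> {}" using w by auto
          fix x y assume xy: "x \<in> W" "y \<in> W"
          then have "(x,y) \<in> (adj ends (insert f (ET - {g})))\<^sup>*" using c eq by (auto simp: connected_graph_def)
          moreover have "v \<notin> verts ends (ET - {g})" using v by (auto simp: verts_def)
          ultimately show "(x,y) \<in> (adj ends (ET-{g}))\<^sup>*"
            using pend_reach[of v ends "ET-{g}" f w x y] f xy v by auto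
        qed
        then show False using tr gE by (auto simp: is_tree_def)
      qed
    qed
  qed
  show ?thesis using c1 c2 by (simp add: is_tree_def)
qed

definition closedv :: "('e \<Rightarrow> 'v set) \<Rightarrow> 'e set \<Rightarrow> 'v set \<Rightarrow> bool" where
  "closedv ends F U \<longleftrightarrow> (\<forall>x\<in>U. \<forall>y. (x,y) \<in> adj ends F \<longrightarrow> y \<in> U)"

lemma forest_closed:
  assumes fin: "finite F" and W: "finite W" and sub: "F \<subseteq> ET"
    and ends: "\<forall>g\<in>ET. ends g \<subseteq> W \<and> ends g \<noteq> {}"
    and br: "\<forall>f\<in>ET. \<exists>a\<in>ends f. \<exists>b\<in>ends f. (a,b) \<notin> (adj ends (ET - {f}))\<^sup>*"
  shows "\<forall>U. U \<subseteq> W \<longrightarrow> U \<noteq> {} \<longrightarrow> closedv ends F U \<longrightarrow> card {g\<in>F. ends g \<subseteq> U} + 1 \<le> card U"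
  using fin sub
proof (induction F rule: finite_induct)
  case empty
  then show ?case using W by (auto simp: card_gt_0_iff Suc_le_eq dest: finite_subset)
next
  case (insert f F)
  show ?case
  proof (intro allI impI)
    fix U assume U: "U \<subseteq> W" "U \<noteq> {}" "closedv ends (insert f F) U"
    have fE: "f \<in> ET" and FE: "F \<subseteq> ET" using insert by auto
    have clF: "closedv ends F U" using U(3) adj_mono[of F "insert f F" ends] by (auto simp: closedv_def)
    have finU: "finite U" using U W finite_subset by blast
    show "card {g\<in>insert f F. ends g \<subseteq> U} + 1 \<le> card U"
    proof (cases "ends f \<inter> U = {}")
      case True
      have "ends f \<noteq> {}" using ends fE by auto
      then have "\<not> ends f \<subseteq> U" using True by blast
      then have "{g\<in>insert f F. ends g \<subseteq> U} = {g\<in>F. ends g \<subseteq> U}" by auto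
      then show ?thesis using insert.IH FE U clF by auto
    next
      case False
      then obtain x where x: "x \<in> ends f" "x \<in> U" by auto
      have fU: "ends f \<subseteq> U"
      proof
        fix y assume "y \<in> ends f"
        then have "(x,y) \<in> adj ends (insert f F)" using x by (auto intro: adj_in)
        then show "y \<in> U" using U(3) x by (auto simp: closedv_def)
      qed
      obtain a b where ab: "a \<in> ends f" "b \<in> ends f" "(a,b) \<notin> (adj ends (ET - {f}))\<^sup>*" using br fE by blast
      have FEf: "F \<subseteq> ET - {f}" using FE insert.hyps(2) by auto
      have nab: "(a,b) \<notin> (adj ends F)\<^sup>*" using ab(3) rtr_mono[of F "ET - {f}" a b ends] FEf by blast
      define X where "X = {y. (a,y) \<in> (adj ends F)\<^sup>*}"
      have aU: "a \<in> U" using fU ab by auto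
      have XU: "X \<subseteq> U"
      proof
        fix y assume "y \<in> X"
        then have "(a,y) \<in> (adj ends F)\<^sup>*" by (simp add: X_def)
        then show "y \<in> U"
          by (induction rule: rtrancl_induct) (use aU clF in \<open>auto simp: closedv_def\<close>)
      qed
      have clX: "closedv ends F X" by (auto simp: closedv_def X_def intro: rtrancl_into_rtrancl)
      have clUX: "closedv ends F (U - X)"
        unfolding closedv_def
      proof (intro ballI allI impI)
        fix y z assume y: "y \<in> U - X" and yz: "(y,z) \<in> adj ends F"
        have "z \<in> U" using clF y yz by (auto simp: closedv_def)
        moreover have "z \<notin> X"
        proof
          assume "z \<in> X"
          then have "(a,z) \<in> (adj ends F)\<^sup>*" by (simp add: X_def)
          then have "(a,y) \<in> (adj ends F)\<^sup>*" using adj_sym[OF yz] by (meson rtrancl.rtrancl_into_rtrancl)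
          then show False using y by (simp add: X_def)
        qed
        ultimately show "z \<in> U - X" by simp
      qed
      have aX: "a \<in> X" by (simp add: X_def)
      have bUX: "b \<in> U - X" using fU ab nab by (auto simp: X_def)
      have IH: "\<forall>U. U \<subseteq> W \<longrightarrow> U \<noteq> {} \<longrightarrow> closedv ends F U \<longrightarrow> card {g\<in>F. ends g \<subseteq> U} + 1 \<le> card U"
        using insert.IH FE by simp
      have IX: "card {g\<in>F. ends g \<subseteq> X} + 1 \<le> card X"
        by (rule IH[rule_format]) (use XU U(1) aX clX in auto)
      have IUX: "card {g\<in>F. ends g \<subseteq> U - X} + 1 \<le> card (U - X)"
        by (rule IH[rule_format]) (use U(1) bUX clUX in auto)
      have split: "{g\<in>insert f F. ends g \<subseteq> U} = insert f ({g\<in>F. ends g \<subseteq> X} \<union> {g\<in>F. ends g \<subseteq> U - X})"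
      proof (intro equalityI subsetI)
        fix g assume g: "g \<in> {g\<in>insert f F. ends g \<subseteq> U}"
        show "g \<in> insert f ({g\<in>F. ends g \<subseteq> X} \<union> {g\<in>F. ends g \<subseteq> U - X})"
        proof (cases "g = f")
          case True then show ?thesis by simp
        next
          case False
          then have gF: "g \<in> F" "ends g \<subseteq> U" using g by auto
          then obtain y where y: "y \<in> ends g" using ends FE by blast
          show ?thesis
          proof (cases "y \<in> X")
            case True
            have "ends g \<subseteq> X" using clX True y gF adj_in[of g F y ends] by (auto simp: closedv_def)
            then show ?thesis using gF by auto
          next
            case False
            have "ends g \<subseteq> U - X"
            proof
              fix z assume z: "z \<in> ends g"
              have "z \<notin> X" using clX False y z gF adj_in[of g F z ends y] by (auto simp: closedv_def)
              then show "z \<in> U - X" using gF z by auto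
            qed
            then show ?thesis using gF by auto
          qed
        qed
      next
        fix g assume "g \<in> insert f ({g\<in>F. ends g \<subseteq> X} \<union> {g\<in>F. ends g \<subseteq> U - X})"
        then show "g \<in> {g\<in>insert f F. ends g \<subseteq> U}" using fU XU by auto
      qed
      have disj: "{g\<in>F. ends g \<subseteq> X} \<inter> {g\<in>F. ends g \<subseteq> U - X} = {}" using ends FE by blast
      have fnot: "f \<notin> {g\<in>F. ends g \<subseteq> X} \<union> {g\<in>F. ends g \<subseteq> U - X}" using insert.hyps(2) by auto
      have c1: "card {g\<in>insert f F. ends g \<subseteq> U} = card {g\<in>F. ends g \<subseteq> X} + card {g\<in>F. ends g \<subseteq> U - X} + 1"
        using split disj fnot insert.hyps(1) by (simp add: card_Un_disjoint)
      have "U = X \<union> (U - X)" using XU by auto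
      then have c2: "card U = card X + card (U - X)"
        using finU XU card_Un_disjoint[of X "U - X"] finite_subset by (metis Diff_disjoint finite_Diff)
      show ?thesis using c1 c2 IX IUX by linarith
    qed
  qed
qed

lemma tree_count:
  assumes tr: "is_tree ends W ET" and W: "finite W" and fin: "finite ET"
    and ends: "\<forall>g\<in>ET. ends g \<subseteq> W \<and> ends g \<noteq> {}"
    and S: "S \<subseteq> ET" and t: "t \<in> W"
  shows "card S + 1 \<le> card (verts ends S \<union> {t})"
proof -
  have br: "\<forall>f\<in>ET. \<exists>a\<in>ends f. \<exists>b\<in>ends f. (a,b) \<notin> (adj ends (ET - {f}))\<^sup>*"
  proof (rule ccontr)
    assume "\<not> ?thesis"
    then obtain f where f: "f \<in> ET" "\<forall>a\<in>ends f. \<forall>b\<in>ends f. (a,b) \<in> (adj ends (ET - {f}))\<^sup>*" by blast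
    have "connected_graph ends W (ET - {f})"
      using tr bypass[OF f(2)] by (auto simp: is_tree_def connected_graph_def)
    then show False using tr f(1) by (auto simp: is_tree_def)
  qed
  have finS: "finite S" using fin S finite_subset by blast
  have U: "verts ends S \<union> {t} \<subseteq> W" using ends S t by (auto simp: verts_def)
  have cl: "closedv ends S (verts ends S \<union> {t})" by (auto simp: closedv_def adj_def verts_def)
  have eq: "{g\<in>S. ends g \<subseteq> verts ends S \<union> {t}} = S" by (auto simp: verts_def)
  have "verts ends S \<union> {t} \<noteq> {}" by auto
  then have "card {g\<in>S. ends g \<subseteq> verts ends S \<union> {t}} + 1 \<le> card (verts ends S \<union> {t})"
    using forest_closed[OF finS W S ends br] U cl by blast
  then show ?thesis using eq by simp
qed




lemma leaf_del_sub: "(F,K) \<in> (leaf_del ends)\<^sup>* \<Longrightarrow> K \<subseteq> F"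
  by (induction rule: rtrancl_induct) (auto simp: leaf_del_def)

lemma leafless_sub: "(F,K) \<in> (leaf_del ends)\<^sup>* \<Longrightarrow> L \<subseteq> F \<Longrightarrow> \<not>(\<exists>v f. leaf_edge ends L v f) \<Longrightarrow> L \<subseteq> K"
proof (induction rule: rtrancl_induct)
  case base then show ?case by simp
next
  case (step K1 K2)
  then obtain f v where K2: "K2 = K1 - {f}" and lf: "leaf_edge ends K1 v f" by (auto simp: leaf_del_def)
  have LK1: "L \<subseteq> K1" using step by auto
  have "f \<notin> L"
  proof
    assume "f \<in> L"
    then have "leaf_edge ends L v f" using lf LK1 by (auto simp: leaf_edge_def)
    then show False using step.prems by blast
  qed
  then show ?case using LK1 K2 by auto
qed


lemma kernel_exists: "finite F \<Longrightarrow> \<exists>K. (F,K) \<in> (leaf_del ends)\<^sup>* \<and> \<not>(\<exists>v f. leaf_edge ends K v f)"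
proof (induction "card F" arbitrary: F rule: less_induct)
  case less
  show ?case
  proof (cases "\<exists>v f. leaf_edge ends F v f")
    case False then show ?thesis by blast
  next
    case True
    then obtain v f where lf: "leaf_edge ends F v f" by blast
    then have fF: "f \<in> F" by (simp add: leaf_edge_def)
    have lt: "card (F - {f}) < card F" using fF less.prems by (meson card_Diff1_less)
    have fin': "finite (F - {f})" using less.prems by simp
    obtain K where K: "(F - {f}, K) \<in> (leaf_del ends)\<^sup>*" "\<not>(\<exists>v f. leaf_edge ends K v f)"
      using less.hyps[OF lt fin'] by blast
    have "(F, F - {f}) \<in> leaf_del ends" using lf by (auto simp: leaf_del_def)
    then show ?thesis using K by (meson converse_rtrancl_into_rtrancl)
  qed
qed

lemma kernel_char: "finite A \<Longrightarrow> (A, kernel_edges ends A) \<in> (leaf_del ends)\<^sup>*"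
proof -
  assume "finite A"
  then obtain K where K: "(A,K) \<in> (leaf_del ends)\<^sup>*" "\<not>(\<exists>v f. leaf_edge ends K v f)"
    using kernel_exists[of A ends] by blast
  have "kernel_edges ends A = K"
    unfolding kernel_edges_def
  proof (rule the_equality)
    show "(A,K) \<in> (leaf_del ends)\<^sup>* \<and> \<not>(\<exists>v f. leaf_edge ends K v f)" using K by simp
    fix K' assume K': "(A,K') \<in> (leaf_del ends)\<^sup>* \<and> \<not>(\<exists>v f. leaf_edge ends K' v f)"
    have K'1: "(A,K') \<in> (leaf_del ends)\<^sup>*" using K' by (rule conjunct1)
    have K'2: "\<not>(\<exists>v f. leaf_edge ends K' v f)" using K' by (rule conjunct2)
    have "K' \<subseteq> K" by (rule leafless_sub[OF K(1) leaf_del_sub[OF K'1] K'2])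
    moreover have "K \<subseteq> K'" by (rule leafless_sub[OF K'1 leaf_del_sub[OF K(1)] K(2)])
    ultimately show "K' = K" by blast
  qed
  then show ?thesis using K(1) by simp
qed

lemma card2_elem: "card S = 2 \<Longrightarrow> v \<in> S \<Longrightarrow> \<exists>w. S = {v,w} \<and> v \<noteq> w"
proof -
  assume c: "card S = 2" and v: "v \<in> S"
  obtain x y where xy: "S = {x,y}" "x \<noteq> y" using c unfolding card_2_iff by blast
  show ?thesis
  proof (cases "v = x")
    case True then show ?thesis using xy by blast
  next
    case False then have "v = y" using v xy by blast
    then have "S = {v,x} \<and> v \<noteq> x" using xy by auto
    then show ?thesis by blast
  qed
qed


lemma pend_inv:
  "(F, K) \<in> (leaf_del ends)\<^sup>* \<Longrightarrow> (\<forall>g\<in>F. ends g \<noteq> {}) \<Longrightarrow> e \<in> F \<Longrightarrow> e \<notin> K \<Longrightarrow>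
   \<exists>p q. ends e = {p,q} \<and> p \<noteq> q \<and> (p,q) \<notin> (adj ends (F - {e}))\<^sup>* \<and>
     is_tree ends {x. (p,x) \<in> (adj ends (F - {e}))\<^sup>*}
       (edges_in ends (F - {e}) {x. (p,x) \<in> (adj ends (F - {e}))\<^sup>*})"
proof (induction rule: converse_rtrancl_induct)
  case base then show ?case by simp
next
  case (step F F')
  then obtain f v where F': "F' = F - {f}" and lf: "leaf_edge ends F v f" by (auto simp: leaf_del_def)
  have fF: "f \<in> F" and vf: "v \<in> ends f" and c2: "card (ends f) = 2" and only: "\<forall>g\<in>F. v \<in> ends g \<longrightarrow> g = f"
    using lf by (auto simp: leaf_edge_def)
  obtain w where fw: "ends f = {v,w}" "v \<noteq> w" using card2_elem[OF c2 vf] by blast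
  have vnot: "v \<notin> verts ends (F - {f})" using only by (auto simp: verts_def)
  show ?case
  proof (cases "e = f")
    case True
    let ?R = "(adj ends (F - {e}))\<^sup>*"
    have Rv: "{x. (v,x) \<in> ?R} = {v}" using rtr_isol[of v _ ends "F - {e}"] vnot True by auto
    have ET: "edges_in ends (F - {e}) {v} = {}"
    proof -
      have "\<And>g. g \<in> F - {e} \<Longrightarrow> ends g \<subseteq> {v} \<Longrightarrow> False"
      proof -
        fix g assume g: "g \<in> F - {e}" "ends g \<subseteq> {v}"
        then have "ends g \<noteq> {}" using step.prems(1) by auto
        then have "v \<in> ends g" using g by auto
        then show False using only g True by auto
      qed
      then show ?thesis by (auto simp: edges_in_def)
    qed
    have tr: "is_tree ends {v} {}" by (auto simp: is_tree_def connected_graph_def)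
    have nvw: "(v,w) \<notin> ?R" using rtr_isol[of v w ends "F - {e}"] vnot True fw by auto
    have T1: "is_tree ends {x. (v,x) \<in> ?R} (edges_in ends (F - {e}) {x. (v,x) \<in> ?R})"
      unfolding Rv ET by (rule tr)
    show ?thesis
      apply (rule exI[of _ v])
      apply (rule exI[of _ w])
      using T1 nvw True fw by simp
  next
    case False
    have eF': "e \<in> F'" using F' False step.prems by auto
    have pr: "\<forall>g\<in>F'. ends g \<noteq> {}" using step.prems F' by auto
    obtain p q where oi: "ends e = {p,q}" "p \<noteq> q" "(p,q) \<notin> (adj ends (F' - {e}))\<^sup>*"
      and tr: "is_tree ends {x. (p,x) \<in> (adj ends (F' - {e}))\<^sup>*}
       (edges_in ends (F' - {e}) {x. (p,x) \<in> (adj ends (F' - {e}))\<^sup>*})"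
      using step.IH[OF pr eF' step.prems(3)] by blast
    define G' where "G' = F' - {e}"
    have G: "F - {e} = insert f G'" using F' False fF by (auto simp: G'_def)
    have vG': "v \<notin> verts ends G'" using vnot F' by (auto simp: G'_def verts_def)
    have fG': "f \<notin> G'" using F' by (simp add: G'_def)
    have eF: "e \<in> F" using step.prems by simp
    have ov: "p \<noteq> v" "q \<noteq> v" using only eF False oi(1) by auto
    define Out' where "Out' = {x. (p,x) \<in> (adj ends G')\<^sup>*}"
    define Out where "Out = {x. (p,x) \<in> (adj ends (F - {e}))\<^sup>*}"
    have reach: "\<And>y. (p,y) \<in> (adj ends (F-{e}))\<^sup>* \<longleftrightarrow> (p,y) \<in> (adj ends G')\<^sup>* \<or> (y = v \<and> (p,w) \<in> (adj ends G')\<^sup>*)"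
    proof
      fix y assume "(p,y) \<in> (adj ends (F-{e}))\<^sup>*"
      then have "(p,y) \<in> (adj ends (insert f G'))\<^sup>*" by (simp only: G)
      then show "(p,y) \<in> (adj ends G')\<^sup>* \<or> (y = v \<and> (p,w) \<in> (adj ends G')\<^sup>*)"
        using pend_reach[OF vG' fw, of p y] ov(1) by blast
    next
      fix y assume y: "(p,y) \<in> (adj ends G')\<^sup>* \<or> (y = v \<and> (p,w) \<in> (adj ends G')\<^sup>*)"
      have sub: "G' \<subseteq> F - {e}" using G by blast
      have m: "\<And>a b. (a,b) \<in> (adj ends G')\<^sup>* \<Longrightarrow> (a,b) \<in> (adj ends (F-{e}))\<^sup>*"
        by (rule rtr_mono[OF sub])
      have fin: "f \<in> F - {e}" using G by blast
      have wv: "(w,v) \<in> adj ends (F-{e})" using adj_in[OF fin, of w ends v] fw by simp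
      show "(p,y) \<in> (adj ends (F-{e}))\<^sup>*"
        using y m wv by (meson rtrancl.rtrancl_into_rtrancl)
    qed
    have noi: "(p,q) \<notin> (adj ends (F - {e}))\<^sup>*" using reach[of q] oi(3) ov(2) unfolding G'_def by blast
    have vOut': "v \<notin> Out'" using rtr_verts[of p v ends G'] vG' ov by (auto simp: Out'_def)
    have tr': "is_tree ends Out' (edges_in ends G' Out')" using tr by (simp add: Out'_def G'_def)
    show ?thesis
    proof (cases "w \<in> Out'")
      case True
      have OutEq: "Out = insert v Out'" using reach True by (auto simp: Out_def Out'_def)
      have ETeq: "edges_in ends (F - {e}) Out = insert f (edges_in ends G' Out')"
      proof (intro equalityI subsetI)
        fix g assume g: "g \<in> edges_in ends (F - {e}) Out"
        show "g \<in> insert f (edges_in ends G' Out')"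
        proof (cases "g = f")
          case True then show ?thesis by simp
        next
          case False
          then have gG: "g \<in> G'" "ends g \<subseteq> insert v Out'" using g G OutEq by (auto simp: edges_in_def)
          then have "v \<notin> ends g" using vG' by (auto simp: verts_def)
          then show ?thesis using gG by (auto simp: edges_in_def)
        qed
      next
        fix g assume "g \<in> insert f (edges_in ends G' Out')"
        then show "g \<in> edges_in ends (F - {e}) Out" using G OutEq fw True by (auto simp: edges_in_def)
      qed
      have "is_tree ends (insert v Out') (insert f (edges_in ends G' Out'))"
      proof (rule tree_pend[OF tr' vOut'])
        show "v \<notin> verts ends (edges_in ends G' Out')" using vG' by (auto simp: verts_def edges_in_def)
        show "w \<in> Out'" by fact
        show "ends f = {v, w}" "v \<noteq> w" by (fact fw)+
        show "f \<notin> edges_in ends G' Out'" using fG' by (simp add: edges_in_def)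
      qed
      then have "is_tree ends Out (edges_in ends (F - {e}) Out)" using OutEq ETeq by simp
      then show ?thesis using oi noi unfolding Out_def by blast
    next
      case False
      have OutEq: "Out = Out'" using reach False by (auto simp: Out_def Out'_def)
      have ETeq: "edges_in ends (F - {e}) Out = edges_in ends G' Out'"
        using G OutEq vOut' fw by (auto simp: edges_in_def)
      have "is_tree ends Out (edges_in ends (F - {e}) Out)" using OutEq ETeq tr' by simp
      then show ?thesis using oi noi unfolding Out_def by blast
    qed
  qed
qed



definition gr :: "('e \<Rightarrow> 'v set) \<Rightarrow> 'e set \<Rightarrow> bool" where
  "gr ends E \<longleftrightarrow> finite E \<and> (\<forall>f\<in>E. finite (ends f) \<and> ends f \<noteq> {})"

lemma fin_verts: "finite X \<Longrightarrow> \<forall>f\<in>X. finite (ends f) \<Longrightarrow> finite (verts ends X)"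
  by (auto simp: verts_def)

lemma verts_mono: "X \<subseteq> Y \<Longrightarrow> verts ends X \<subseteq> verts ends Y"
  by (auto simp: verts_def)

lemma gr_sub: "gr ends E \<Longrightarrow> X \<subseteq> E \<Longrightarrow> finite X \<and> finite (verts ends X) \<and> (\<forall>f\<in>X. finite (ends f) \<and> ends f \<noteq> {})"
proof -
  assume g: "gr ends E" and X: "X \<subseteq> E"
  have f1: "finite X" using g X finite_subset by (auto simp: gr_def)
  have f2: "\<forall>f\<in>X. finite (ends f) \<and> ends f \<noteq> {}" using g X by (auto simp: gr_def)
  have "finite (verts ends X)" using f1 f2 fin_verts by blast
  then show ?thesis using f1 f2 by blast
qed

lemma tight_exists:
  assumes "gr ends E" "k \<ge> 1"
  shows "D \<subseteq> E \<Longrightarrow> D \<noteq> {} \<Longrightarrow> card (verts ends D) + k \<le> card D \<Longrightarrow>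
     \<exists>D'\<subseteq>D. D' \<noteq> {} \<and> card D' = card (verts ends D') + k"
proof (induction "card D" arbitrary: D rule: less_induct)
  case less
  show ?case
  proof (cases "card D = card (verts ends D) + k")
    case True then show ?thesis using less.prems by blast
  next
    case False
    then have gt: "card (verts ends D) + k < card D" using less.prems by simp
    obtain f where f: "f \<in> D" using less.prems by blast
    have fin: "finite D" "finite (verts ends D)" using gr_sub[OF assms(1) less.prems(1)] by auto
    have c1: "card (D - {f}) = card D - 1" using f fin by simp
    have "verts ends (D - {f}) \<subseteq> verts ends D" by (rule verts_mono) auto
    then have c2: "card (verts ends (D - {f})) \<le> card (verts ends D)" using fin card_mono by blast
    have ne: "D - {f} \<noteq> {}"
    proof
      assume "D - {f} = {}"
      then have "D = {f}" using f by blast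
      then show False using gt assms(2) by simp
    qed
    have lt: "card (D - {f}) < card D" using c1 gt by simp
    have s1: "D - {f} \<subseteq> E" using less.prems(1) by blast
    have s2: "card (verts ends (D - {f})) + k \<le> card (D - {f})" using c1 c2 gt by linarith
    have "\<exists>D'\<subseteq>D - {f}. D' \<noteq> {} \<and> card D' = card (verts ends D') + k"
      by (rule less.hyps[OF lt s1 ne s2])
    then show ?thesis by blast
  qed
qed

lemma circ_in_tight:
  assumes "gr ends E"
  shows "D \<subseteq> E \<Longrightarrow> D \<noteq> {} \<Longrightarrow> card D = card (verts ends D) + k \<Longrightarrow> \<exists>C\<subseteq>D. Mk_circuit ends E k C"
proof (induction "card D" arbitrary: D rule: less_induct)
  case less
  show ?case
  proof (cases "\<forall>D'. D' \<subseteq> D \<and> D' \<noteq> {} \<and> card D' = card (verts ends D') + k \<longrightarrow> D' = D")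
    case True
    then have "Mk_circuit ends E k D" using less.prems by (simp add: Mk_circuit_def)
    then show ?thesis by blast
  next
    case False
    then obtain D' where D': "D' \<subseteq> D" "D' \<noteq> {}" "card D' = card (verts ends D') + k" "D' \<noteq> D" by blast
    have fin: "finite D" using gr_sub[OF assms less.prems(1)] by auto
    have "card D' < card D" using D' fin by (meson psubsetI psubset_card_mono)
    then obtain C where "C \<subseteq> D'" "Mk_circuit ends E k C" using less.hyps D' less.prems(1) by (meson order_trans)
    then show ?thesis using D'(1) by blast
  qed
qed

lemma circ_exists:
  assumes "gr ends E" "k \<ge> 1" "D \<subseteq> E" "D \<noteq> {}" "card (verts ends D) + k \<le> card D"
  shows "\<exists>C\<subseteq>D. Mk_circuit ends E k C"
proof -
  obtain D' where D': "D' \<subseteq> D" "D' \<noteq> {}" "card D' = card (verts ends D') + k"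
    using tight_exists[OF assms(1,2) assms(3-5)] by blast
  obtain C where "C \<subseteq> D'" "Mk_circuit ends E k C"
    using circ_in_tight[OF assms(1), of D' k] D' assms(3) by blast
  then show ?thesis using D'(1) by blast
qed

lemma indep_count:
  assumes "gr ends E" "k \<ge> 1" "Mk_indep ends E k I" "D \<subseteq> I" "D \<noteq> {}"
  shows "card D < card (verts ends D) + k"
proof (rule ccontr)
  assume "\<not> ?thesis"
  then have "card (verts ends D) + k \<le> card D" by simp
  moreover have DE: "D \<subseteq> E" using assms(3,4) by (auto simp: Mk_indep_def)
  ultimately obtain C where "C \<subseteq> D" "Mk_circuit ends E k C"
    using circ_exists[OF assms(1,2) DE assms(5)] by blast
  moreover have "C \<subseteq> I" using \<open>C \<subseteq> D\<close> assms(4) by blast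
  ultimately show False using assms(3) unfolding Mk_indep_def by blast
qed

lemma circ_proper:
  assumes "gr ends E" "k \<ge> 1" "Mk_circuit ends E k C" "D \<subseteq> C" "D \<noteq> C" "D \<noteq> {}"
  shows "card D < card (verts ends D) + k"
proof (rule ccontr)
  assume "\<not> ?thesis"
  then have "card (verts ends D) + k \<le> card D" by simp
  moreover have CE: "C \<subseteq> E" using assms(3) by (simp add: Mk_circuit_def)
  moreover have DE: "D \<subseteq> E" using CE assms(4) by blast
  ultimately obtain C' where C': "C' \<subseteq> D" "Mk_circuit ends E k C'"
    using circ_exists[OF assms(1,2) DE assms(6)] by blast
  have min: "\<forall>D. D \<subseteq> C \<and> D \<noteq> {} \<and> card D = card (verts ends D) + k \<longrightarrow> D = C"
    using assms(3) by (simp add: Mk_circuit_def)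
  have t': "C' \<noteq> {}" "card C' = card (verts ends C') + k" using C'(2) by (simp_all add: Mk_circuit_def)
  have "C' \<subseteq> C" using C'(1) assms(4) by blast
  then have "C' = C" using min t' by blast
  then show False using C'(1) assms(4,5) by blast
qed

lemma count_split:
  assumes fin: "finite C" "\<forall>f\<in>C. finite (ends f)"
  shows "card (verts ends {f\<in>C. ends f \<inter> W = {}}) + card (verts ends {f\<in>C. ends f \<inter> W \<noteq> {}} \<inter> W)
         \<le> card (verts ends C)"
proof -
  let ?D = "verts ends {f\<in>C. ends f \<inter> W = {}}"
  let ?S = "verts ends {f\<in>C. ends f \<inter> W \<noteq> {}} \<inter> W"
  have disj: "?D \<inter> ?S = {}" by (auto simp: verts_def)
  have sub: "?D \<union> ?S \<subseteq> verts ends C" by (auto simp: verts_def)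
  have fv: "finite (verts ends C)" using fin fin_verts by blast
  have "card (?D \<union> ?S) = card ?D + card ?S"
    using disj sub fv by (meson card_Un_disjoint finite_Un finite_subset)
  then show ?thesis using card_mono[OF fv sub] by simp
qed

definition good :: "('e \<Rightarrow> 'v set) \<Rightarrow> 'v set \<Rightarrow> 'e set \<Rightarrow> bool" where
  "good ends W F0 \<longleftrightarrow> (\<forall>S\<subseteq>F0. \<forall>t\<in>W. card S + 1 \<le> card (verts ends S \<union> {t})) \<and> verts ends F0 \<subseteq> W"

lemma good_count:
  assumes g: "good ends W F0" and S: "S \<subseteq> insert u F0" and fin: "finite S" "\<forall>f\<in>S. finite (ends f) \<and> ends f \<noteq> {}"
    and u: "u \<in> S \<Longrightarrow> ends u \<inter> W \<noteq> {}"
  shows "card S \<le> card (verts ends S \<inter> W)"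
proof -
  have fv: "finite (verts ends S)" using fin fin_verts by blast
  show ?thesis
  proof (cases "u \<in> S")
    case True
    then obtain t where t: "t \<in> ends u" "t \<in> W" using u by blast
    have S': "S - {u} \<subseteq> F0" using S by auto
    have c: "card (S - {u}) + 1 \<le> card (verts ends (S - {u}) \<union> {t})" using g S' t by (simp add: good_def)
    have "verts ends (S - {u}) \<subseteq> W" using g S' verts_mono[OF S', of ends] by (auto simp: good_def)
    then have "verts ends (S - {u}) \<union> {t} \<subseteq> verts ends S \<inter> W" using t True by (auto simp: verts_def)
    then have "card (verts ends (S - {u}) \<union> {t}) \<le> card (verts ends S \<inter> W)" using fv by (simp add: card_mono)
    moreover have "card S = card (S - {u}) + 1" using True fin(1) card_Suc_Diff1 by fastforce
    ultimately show ?thesis using c by linarith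
  next
    case False
    then have S': "S \<subseteq> F0" using S by auto
    show ?thesis
    proof (cases "S = {}")
      case True then show ?thesis by simp
    next
      case False
      then obtain f where f: "f \<in> S" by blast
      then obtain t where t: "t \<in> ends f" using fin by blast
      have tv: "t \<in> verts ends S" using f t by (auto simp: verts_def)
      have vW: "verts ends S \<subseteq> W" using g verts_mono[OF S', of ends] by (auto simp: good_def)
      have "card S + 1 \<le> card (verts ends S \<union> {t})" using g S' tv vW by (simp add: good_def subset_iff)
      moreover have "verts ends S \<union> {t} = verts ends S \<inter> W" using tv vW by auto
      ultimately show ?thesis by simp
    qed
  qed
qed

lemma good_strict:
  assumes g: "good ends W F0" and S: "S \<subseteq> F0" "S \<noteq> {}" and fin: "\<forall>f\<in>S. ends f \<noteq> {}"
  shows "card S + 1 \<le> card (verts ends S \<inter> W)"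
proof -
  obtain f where f: "f \<in> S" using S by blast
  then obtain t where t: "t \<in> ends f" using fin by blast
  have tv: "t \<in> verts ends S" using f t by (auto simp: verts_def)
  have vW: "verts ends S \<subseteq> W" using g verts_mono[OF S(1), of ends] by (auto simp: good_def)
  have "card S + 1 \<le> card (verts ends S \<union> {t})" using g S tv vW by (simp add: good_def subset_iff)
  moreover have "verts ends S \<union> {t} = verts ends S \<inter> W" using tv vW by auto
  ultimately show ?thesis by simp
qed



lemma circ_basic: "Mk_circuit ends E k C \<Longrightarrow> C \<subseteq> E \<and> C \<noteq> {} \<and> card C = card (verts ends C) + k"
  by (simp add: Mk_circuit_def)

lemma aug:
  assumes G: "gr ends E" and k: "k \<ge> 1" and I: "Mk_indep ends E k I" and g: "good ends W F0"
    and IF: "\<forall>f\<in>I. ends f \<inter> W \<noteq> {} \<longrightarrow> f \<in> F0" and u: "u \<in> E" "u \<notin> I" "ends u \<inter> W \<noteq> {}"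
  shows "Mk_indep ends E k (insert u I)"
proof -
  have IE: "I \<subseteq> E" using I by (simp add: Mk_indep_def)
  have "\<not> (\<exists>C. Mk_circuit ends E k C \<and> C \<subseteq> insert u I)"
  proof
    assume "\<exists>C. Mk_circuit ends E k C \<and> C \<subseteq> insert u I"
    then obtain C where C: "Mk_circuit ends E k C" "C \<subseteq> insert u I" by blast
    have Cb: "C \<subseteq> E" "C \<noteq> {}" "card C = card (verts ends C) + k" using circ_basic[OF C(1)] by auto
    have Cf: "finite C" "finite (verts ends C)" "\<forall>f\<in>C. finite (ends f) \<and> ends f \<noteq> {}" using gr_sub[OF G Cb(1)] by auto
    define S where "S = {f\<in>C. ends f \<inter> W \<noteq> {}}"
    define D where "D = {f\<in>C. ends f \<inter> W = {}}"
    have SD: "C = S \<union> D" "S \<inter> D = {}" by (auto simp: S_def D_def)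
    have Sf: "finite S" "finite D" using Cf(1) by (auto simp: S_def D_def)
    have cC: "card C = card S + card D" using SD Sf card_Un_disjoint by metis
    have Ssub: "S \<subseteq> insert u F0" using C(2) IF by (auto simp: S_def)
    have cS: "card S \<le> card (verts ends S \<inter> W)"
      by (rule good_count[OF g Ssub Sf(1)]) (use Cf(3) u(3) in \<open>auto simp: S_def\<close>)
    have cV: "card (verts ends D) + card (verts ends S \<inter> W) \<le> card (verts ends C)"
      using count_split[of C ends W] Cf by (simp add: S_def D_def)
    show False
    proof (cases "D = {}")
      case True
      then show False using cC cS cV Cb(3) k by simp
    next
      case False
      have "D \<subseteq> I" using C(2) u(3) by (auto simp: D_def)
      then have "card D < card (verts ends D) + k" using indep_count[OF G k I _ False] by blast
      then show False using cC cS cV Cb(3) by linarith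
    qed
  qed
  then show ?thesis using IE u(1) by (simp add: Mk_indep_def)
qed

lemma no_circ:
  assumes G: "gr ends E" and k: "k \<ge> 1" and g: "good ends W F0"
    and EF: "\<forall>f\<in>E. ends f \<inter> W \<noteq> {} \<longrightarrow> f \<in> F0" and C: "Mk_circuit ends E k C" and x: "x \<in> C" "x \<in> F0"
  shows False
proof -
  have Cb: "C \<subseteq> E" "C \<noteq> {}" "card C = card (verts ends C) + k" using circ_basic[OF C] by auto
  have Cf: "finite C" "finite (verts ends C)" "\<forall>f\<in>C. finite (ends f) \<and> ends f \<noteq> {}" using gr_sub[OF G Cb(1)] by auto
  define S where "S = {f\<in>C. ends f \<inter> W \<noteq> {}}"
  define D where "D = {f\<in>C. ends f \<inter> W = {}}"
  have SD: "C = S \<union> D" "S \<inter> D = {}" by (auto simp: S_def D_def)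
  have Sf: "finite S" "finite D" using Cf(1) by (auto simp: S_def D_def)
  have cC: "card C = card S + card D" using SD Sf card_Un_disjoint by metis
  have SF: "S \<subseteq> F0" using Cb(1) EF by (auto simp: S_def)
  have xW: "ends x \<inter> W \<noteq> {}"
  proof -
    have "ends x \<subseteq> W" using g x(2) by (auto simp: good_def verts_def)
    then show ?thesis using Cf(3) x(1) by blast
  qed
  have xS: "x \<in> S" using x xW by (simp add: S_def)
  have cS: "card S + 1 \<le> card (verts ends S \<inter> W)"
    by (rule good_strict[OF g SF]) (use xS Cf(3) in \<open>auto simp: S_def\<close>)
  have cV: "card (verts ends D) + card (verts ends S \<inter> W) \<le> card (verts ends C)"
    using count_split[of C ends W] Cf by (simp add: S_def D_def)
  show False
  proof (cases "D = {}")
    case True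
    then show False using cC cS cV Cb(3) by simp
  next
    case False
    have DC1: "D \<subseteq> C" by (auto simp: D_def)
    have "x \<notin> D" using xS SD(2) by blast
    then have DC2: "D \<noteq> C" using x(1) by blast
    note DC = DC1 DC2
    have "card D < card (verts ends D) + k" by (rule circ_proper[OF G k C DC False])
    then show False using cC cS cV Cb(3) by linarith
  qed
qed

lemma base_exchange:
  assumes M: "Mk_is_matroid ends E k" and B: "Mk_base ends E k B" and e: "e \<in> B"
    and u: "u \<in> E" "u \<notin> B" and Iu: "Mk_indep ends E k (insert u (B - {e}))"
  shows "Mk_base ends E k (insert u (B - {e}))"
proof -
  have BI: "Mk_indep ends E k B" and Bmax: "\<forall>I. Mk_indep ends E k I \<and> B \<subseteq> I \<longrightarrow> I = B"
    using B by (auto simp: Mk_base_def)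
  have BE: "B \<subseteq> E" using BI by (simp add: Mk_indep_def)
  have dep: "\<And>x. x \<in> E \<Longrightarrow> x \<notin> B \<Longrightarrow> \<exists>C. Mk_circuit ends E k C \<and> C \<subseteq> insert x B"
  proof -
    fix x assume x: "x \<in> E" "x \<notin> B"
    have "\<not> Mk_indep ends E k (insert x B)" using Bmax x(2) by blast
    then show "\<exists>C. Mk_circuit ends E k C \<and> C \<subseteq> insert x B" using x(1) BE by (simp add: Mk_indep_def)
  qed
  obtain Cu where Cu: "Mk_circuit ends E k Cu" "Cu \<subseteq> insert u B" using dep u by blast
  have eCu: "e \<in> Cu"
  proof (rule ccontr)
    assume "e \<notin> Cu"
    then have "Cu \<subseteq> insert u (B - {e})" using Cu(2) by blast
    then show False using Iu Cu(1) by (auto simp: Mk_indep_def)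
  qed
  have "\<forall>I. Mk_indep ends E k I \<and> insert u (B - {e}) \<subseteq> I \<longrightarrow> I = insert u (B - {e})"
  proof (intro allI impI)
    fix I assume I: "Mk_indep ends E k I \<and> insert u (B - {e}) \<subseteq> I"
    have IE: "I \<subseteq> E" using I by (simp add: Mk_indep_def)
    have noC: "\<And>C. Mk_circuit ends E k C \<Longrightarrow> C \<subseteq> I \<Longrightarrow> False" using I by (auto simp: Mk_indep_def)
    show "I = insert u (B - {e})"
    proof (rule ccontr)
      assume "I \<noteq> insert u (B - {e})"
      then obtain f where f: "f \<in> I" "f \<notin> insert u (B - {e})" using I by blast
      show False
      proof (cases "f = e")
        case True
        then have "Cu \<subseteq> I" using Cu(2) I f by blast
        then show False using noC Cu(1) by blast
      next
        case False
        then have fB: "f \<notin> B" "f \<in> E" "f \<noteq> u" using f IE by auto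
        obtain Cf where Cf: "Mk_circuit ends E k Cf" "Cf \<subseteq> insert f B" using dep fB by blast
        show False
        proof (cases "e \<in> Cf")
          case False
          then have "Cf \<subseteq> I" using Cf(2) I f by blast
          then show False using noC Cf(1) by blast
        next
          case True
          have fCf: "f \<in> Cf"
          proof (rule ccontr)
            assume "f \<notin> Cf"
            then have "Cf \<subseteq> B" using Cf(2) by blast
            then show False using BI Cf(1) by (auto simp: Mk_indep_def)
          qed
          have ne: "Cf \<noteq> Cu" using fCf Cu(2) fB by blast
          obtain C3 where C3: "Mk_circuit ends E k C3" "C3 \<subseteq> (Cf \<union> Cu) - {e}"
            using M Cf(1) Cu(1) ne True eCu unfolding Mk_is_matroid_def by blast
          have "C3 \<subseteq> I" using C3(2) Cf(2) Cu(2) I f by blast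
          then show False using noC C3(1) by blast
        qed
      qed
    qed
  qed
  then show ?thesis using Iu by (simp add: Mk_base_def)
qed

lemma fund_eq:
  assumes B: "Mk_base ends E k B" and e: "e \<in> B" and XE: "X \<subseteq> E" and eX: "e \<in> X" and XB: "X \<inter> B = {e}"
    and a: "\<forall>u\<in>X - {e}. Mk_base ends E k (insert u (B - {e}))"
    and b: "\<forall>B'. Mk_base ends E k B' \<longrightarrow> X \<inter> B' \<noteq> {}"
  shows "fund_cocircuit ends E k e B = X"
proof -
  have key: "\<And>K. e \<in> K \<Longrightarrow> K \<inter> B \<subseteq> {e} \<Longrightarrow> (\<forall>B'. Mk_base ends E k B' \<longrightarrow> K \<inter> B' \<noteq> {}) \<Longrightarrow> X \<subseteq> K"
  proof
    fix K x assume K: "e \<in> K" "K \<inter> B \<subseteq> {e}" "\<forall>B'. Mk_base ends E k B' \<longrightarrow> K \<inter> B' \<noteq> {}" and x: "x \<in> X"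
    show "x \<in> K"
    proof (cases "x = e")
      case True then show ?thesis using K by simp
    next
      case False
      then have "Mk_base ends E k (insert x (B - {e}))" using a x by blast
      then have "K \<inter> insert x (B - {e}) \<noteq> {}" using K(3) by blast
      then show ?thesis using K(2) by blast
    qed
  qed
  have cc: "Mk_cocircuit ends E k X"
    unfolding Mk_cocircuit_def
  proof (intro conjI allI impI)
    show "X \<subseteq> E" "X \<noteq> {}" using XE eX by auto
    show "\<And>B'. Mk_base ends E k B' \<Longrightarrow> X \<inter> B' \<noteq> {}" using b by blast
    fix K' assume K': "K' \<subseteq> X \<and> K' \<noteq> {} \<and> (\<forall>B. Mk_base ends E k B \<longrightarrow> K' \<inter> B \<noteq> {})"
    have ne: "K' \<inter> B \<noteq> {}" using K' B by blast
    have "K' \<inter> B \<subseteq> {e}" using K' XB by blast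
    then have "e \<in> K'" using ne by blast
    then have "X \<subseteq> K'" using key[of K'] K' XB by blast
    then show "K' = X" using K' by blast
  qed
  show ?thesis
    unfolding fund_cocircuit_def
  proof (rule the_equality)
    show "Mk_cocircuit ends E k X \<and> X \<inter> B = {e}" using cc XB by simp
    fix K assume K: "Mk_cocircuit ends E k K \<and> K \<inter> B = {e}"
    have Km: "\<forall>B'. Mk_base ends E k B' \<longrightarrow> K \<inter> B' \<noteq> {}" using K by (simp add: Mk_cocircuit_def)
    have "X \<subseteq> K" using key[of K] K Km by blast
    moreover have "\<forall>K'. K' \<subseteq> K \<and> K' \<noteq> {} \<and> (\<forall>B. Mk_base ends E k B \<longrightarrow> K' \<inter> B \<noteq> {}) \<longrightarrow> K' = K"
      using K by (simp add: Mk_cocircuit_def)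
    ultimately show "K = X" using b eX by blast
  qed
qed



lemma card_two: "finite U \<Longrightarrow> X \<subseteq> U \<Longrightarrow> Y \<subseteq> U \<Longrightarrow> X \<inter> Y = {} \<Longrightarrow> card X + card Y \<le> card U"
proof -
  assume a: "finite U" "X \<subseteq> U" "Y \<subseteq> U" "X \<inter> Y = {}"
  have "card (X \<union> Y) = card X + card Y" using a by (meson card_Un_disjoint finite_subset)
  moreover have "card (X \<union> Y) \<le> card U" using a by (simp add: card_mono)
  ultimately show ?thesis by simp
qed

lemma good_weak: "good ends W F \<Longrightarrow> S \<subseteq> F \<Longrightarrow> \<forall>f\<in>S. ends f \<noteq> {} \<Longrightarrow> card S \<le> card (verts ends S)"
proof -
  assume g: "good ends W F" and S: "S \<subseteq> F" and ne: "\<forall>f\<in>S. ends f \<noteq> {}"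
  show ?thesis
  proof (cases "S = {}")
    case True then show ?thesis by simp
  next
    case False
    then obtain f where f: "f \<in> S" by blast
    then obtain t where t: "t \<in> ends f" using ne by blast
    have tv: "t \<in> verts ends S" using f t by (auto simp: verts_def)
    have "verts ends S \<subseteq> W" using g verts_mono[OF S, of ends] by (auto simp: good_def)
    then have "t \<in> W" using tv by blast
    then have "card S + 1 \<le> card (verts ends S \<union> {t})" using g S by (simp add: good_def)
    moreover have "verts ends S \<union> {t} = verts ends S" using tv by blast
    ultimately show ?thesis by simp
  qed
qed

lemma good_combine:
  assumes g1: "good ends T1 E1" and g2: "good ends T2 E2" and disj: "T1 \<inter> T2 = {}"
    and a: "a \<in> ends e" "a \<in> T1" and b: "b \<in> ends e" "b \<in> T2" and eT: "ends e \<subseteq> T1 \<union> T2"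
    and fin: "finite E1" "finite E2" "\<forall>f\<in>insert e (E1 \<union> E2). finite (ends f) \<and> ends f \<noteq> {}"
  shows "good ends (T1 \<union> T2) (insert e (E1 \<union> E2))"
  unfolding good_def
proof (intro conjI allI impI ballI)
  have v1: "verts ends E1 \<subseteq> T1" and v2: "verts ends E2 \<subseteq> T2" using g1 g2 by (auto simp: good_def)
  show "verts ends (insert e (E1 \<union> E2)) \<subseteq> T1 \<union> T2" using v1 v2 eT by (auto simp: verts_def)
  fix S t assume S: "S \<subseteq> insert e (E1 \<union> E2)" and t: "t \<in> T1 \<union> T2"
  define S1 where "S1 = S \<inter> E1"
  define S2 where "S2 = S \<inter> E2"
  have S1: "S1 \<subseteq> E1" and S2: "S2 \<subseteq> E2" by (auto simp: S1_def S2_def)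
  have vS1: "verts ends S1 \<subseteq> T1" using v1 verts_mono[OF S1, of ends] by blast
  have vS2: "verts ends S2 \<subseteq> T2" using v2 verts_mono[OF S2, of ends] by blast
  have finS: "finite S" using S fin(1,2) finite_subset by auto
  have fv: "finite (verts ends S \<union> {t})" using finS fin(3) S fin_verts[of S ends] by blast
  have vs1: "verts ends S1 \<subseteq> verts ends S" and vs2: "verts ends S2 \<subseteq> verts ends S"
    by (auto simp: S1_def S2_def verts_def)
  have ne1: "\<forall>f\<in>S1. ends f \<noteq> {}" and ne2: "\<forall>f\<in>S2. ends f \<noteq> {}" using fin(3) S1 S2 by auto
  have cS: "card S \<le> card S1 + card S2 + card (S \<inter> {e})"
  proof -
    have "S \<subseteq> (S1 \<union> S2) \<union> (S \<inter> {e})" using S by (auto simp: S1_def S2_def)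
    then have "card S \<le> card ((S1 \<union> S2) \<union> (S \<inter> {e}))" using finS by (intro card_mono) (auto simp: S1_def S2_def)
    also have "\<dots> \<le> card (S1 \<union> S2) + card (S \<inter> {e})" by (rule card_Un_le)
    also have "\<dots> \<le> card S1 + card S2 + card (S \<inter> {e})" using card_Un_le[of S1 S2] by simp
    finally show ?thesis .
  qed
  show "card S + 1 \<le> card (verts ends S \<union> {t})"
  proof (cases "e \<in> S")
    case True
    have L1: "card S1 + 1 \<le> card (verts ends S1 \<union> {a})" using g1 S1 a by (simp add: good_def)
    have L2: "card S2 + 1 \<le> card (verts ends S2 \<union> {b})" using g2 S2 b by (simp add: good_def)
    have ae: "a \<in> verts ends S" "b \<in> verts ends S" using True a b by (auto simp: verts_def)
    have "card (verts ends S1 \<union> {a}) + card (verts ends S2 \<union> {b}) \<le> card (verts ends S \<union> {t})"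
      by (rule card_two[OF fv]) (use vs1 vs2 ae vS1 vS2 a b disj in auto)
    moreover have "card (S \<inter> {e}) = 1" using True by simp
    ultimately show ?thesis using cS L1 L2 by linarith
  next
    case False
    then have "card (S \<inter> {e}) = 0" by simp
    then have cS': "card S \<le> card S1 + card S2" using cS by simp
    show ?thesis
    proof (cases "t \<in> T1")
      case True
      have L1: "card S1 + 1 \<le> card (verts ends S1 \<union> {t})" using g1 S1 True by (simp add: good_def)
      have L2: "card S2 \<le> card (verts ends S2)" by (rule good_weak[OF g2 S2 ne2])
      have "card (verts ends S1 \<union> {t}) + card (verts ends S2) \<le> card (verts ends S \<union> {t})"
        by (rule card_two[OF fv]) (use vs1 vs2 vS1 vS2 True disj in auto)
      then show ?thesis using cS' L1 L2 by linarith
    next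
      case False
      then have tT2: "t \<in> T2" using t by blast
      have L1: "card S2 + 1 \<le> card (verts ends S2 \<union> {t})" using g2 S2 tT2 by (simp add: good_def)
      have L2: "card S1 \<le> card (verts ends S1)" by (rule good_weak[OF g1 S1 ne1])
      have "card (verts ends S2 \<union> {t}) + card (verts ends S1) \<le> card (verts ends S \<union> {t})"
        by (rule card_two[OF fv]) (use vs1 vs2 vS1 vS2 tT2 disj in auto)
      then show ?thesis using cS' L1 L2 by linarith
    qed
  qed
qed

lemma in_comp:
  "(u,x) \<in> (adj ends B)\<^sup>* \<Longrightarrow> u \<in> ends e \<Longrightarrow> (u,x) \<in> (adj ends (edge_component ends B e))\<^sup>*"
proof (induction rule: rtrancl_induct)
  case base then show ?case by simp
next
  case (step y z)
  then obtain g where g: "g \<in> B" "y \<in> ends g" "z \<in> ends g" by (auto simp: adj_def)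
  have "g \<in> edge_component ends B e" using g step(1) step.prems by (auto simp: edge_component_def)
  then have "(y,z) \<in> adj ends (edge_component ends B e)" using g by (auto intro: adj_in)
  then show ?case using step by (meson rtrancl.rtrancl_into_rtrancl)
qed

lemma split_e:
  "(y,x) \<in> (adj ends F)\<^sup>* \<Longrightarrow> (y,x) \<in> (adj ends (F - {e}))\<^sup>* \<or> (\<exists>z\<in>ends e. (z,x) \<in> (adj ends (F - {e}))\<^sup>*)"
proof (induction rule: rtrancl_induct)
  case base then show ?case by simp
next
  case (step x' z)
  then obtain g where g: "g \<in> F" "x' \<in> ends g" "z \<in> ends g" by (auto simp: adj_def)
  show ?case
  proof (cases "g = e")
    case True
    then show ?thesis using g by blast
  next
    case False
    then have st: "(x',z) \<in> adj ends (F - {e})" using g by (auto intro: adj_in)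
    from step.IH show ?thesis
    proof
      assume "(y,x') \<in> (adj ends (F - {e}))\<^sup>*"
      then show ?thesis using st by (meson rtrancl.rtrancl_into_rtrancl)
    next
      assume "\<exists>z\<in>ends e. (z,x') \<in> (adj ends (F - {e}))\<^sup>*"
      then show ?thesis using st by (meson rtrancl.rtrancl_into_rtrancl)
    qed
  qed
qed



theorem mainTheorem18:
  fixes ends :: "'e \<Rightarrow> 'v set" and E B :: "'e set" and k :: nat and e :: 'e
  assumes "is_graph ends E"
    and "k \<ge> 1"
    and "Mk_is_matroid ends E k"
    and "Mk_connected ends E k"
    and "Mk_base ends E k B"
    and "e \<in> B"
    and "e \<notin> kernel_edges ends (edge_component ends B e)"
  shows "let A = edge_component ends B e;
             comps = components ends (verts ends A) (A - {e})
         in card comps = 2 \<and>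
            (\<exists>!T. T \<in> comps \<and> is_tree ends T (edges_in ends (A - {e}) T)) \<and>
            (\<forall>T. T \<in> comps \<and> is_tree ends T (edges_in ends (A - {e}) T) \<longrightarrow>
               fund_cocircuit ends E k e B =
                 {e} \<union> {u \<in> E - B. ends u \<inter> T \<noteq> {}})"
proof -
  have G: "gr ends E"
  proof -
    have "finite E" using assms(1) by (simp add: is_graph_def)
    moreover have "\<forall>f\<in>E. finite (ends f) \<and> ends f \<noteq> {}"
    proof
      fix f assume "f \<in> E"
      then have "card (ends f) = 1 \<or> card (ends f) = 2" using assms(1) by (simp add: is_graph_def)
      then have "card (ends f) \<noteq> 0" by auto
      then show "finite (ends f) \<and> ends f \<noteq> {}" by (simp add: card_eq_0_iff)
    qed
    ultimately show ?thesis by (simp add: gr_def)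
  qed
  have k: "k \<ge> 1" by (rule assms(2))
  have BI: "Mk_indep ends E k B" and Bmax: "\<forall>I. Mk_indep ends E k I \<and> B \<subseteq> I \<longrightarrow> I = B"
    using assms(5) by (auto simp: Mk_base_def)
  have BE: "B \<subseteq> E" using BI by (simp add: Mk_indep_def)
  have Bnot: "\<And>u. u \<notin> B \<Longrightarrow> \<not> Mk_indep ends E k (insert u B)" using Bmax by blast
  define A where "A = edge_component ends B e"
  define VA where "VA = verts ends A"
  define R where "R = (adj ends (A - {e}))\<^sup>*"
  have AB: "A \<subseteq> B" by (auto simp: A_def edge_component_def)
  have AE: "A \<subseteq> E" using AB BE by blast
  have Af: "finite A" "finite VA" "\<forall>f\<in>A. finite (ends f) \<and> ends f \<noteq> {}"
    using gr_sub[OF G AE] by (auto simp: VA_def)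
  have eBE: "e \<in> E" using BE assms(6) by blast
  have eE: "finite (ends e)" "ends e \<noteq> {}" using G eBE by (auto simp: gr_def)
  have eA: "e \<in> A"
  proof -
    obtain u where "u \<in> ends e" using eE by blast
    then show ?thesis using assms(6) by (auto simp: A_def edge_component_def)
  qed
  have eVA: "ends e \<subseteq> VA" using eA by (auto simp: VA_def verts_def)
  have G1: "\<And>f. f \<in> B \<Longrightarrow> ends f \<inter> VA \<noteq> {} \<Longrightarrow> f \<in> A"
  proof -
    fix f assume f: "f \<in> B" "ends f \<inter> VA \<noteq> {}"
    then obtain x g where x: "x \<in> ends f" "g \<in> A" "x \<in> ends g" by (auto simp: VA_def verts_def)
    then obtain u v where uv: "u \<in> ends e" "v \<in> ends g" "(u,v) \<in> (adj ends B)\<^sup>*"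
      by (auto simp: A_def edge_component_def)
    have "g \<in> B" using x AB by blast
    then have "(v,x) \<in> adj ends B" using x uv by (auto intro: adj_in)
    then have "(u,x) \<in> (adj ends B)\<^sup>*" using uv by (meson rtrancl.rtrancl_into_rtrancl)
    then show "f \<in> A" using f x uv by (auto simp: A_def edge_component_def)
  qed
  have reach: "\<And>x. x \<in> VA \<Longrightarrow> \<exists>z\<in>ends e. (z,x) \<in> R"
  proof -
    fix x assume "x \<in> VA"
    then obtain g where g: "g \<in> A" "x \<in> ends g" by (auto simp: VA_def verts_def)
    then obtain u v where uv: "u \<in> ends e" "v \<in> ends g" "(u,v) \<in> (adj ends B)\<^sup>*"
      by (auto simp: A_def edge_component_def)
    have "g \<in> B" using g AB by blast
    then have "(v,x) \<in> adj ends B" using g uv by (auto intro: adj_in)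
    then have "(u,x) \<in> (adj ends B)\<^sup>*" using uv by (meson rtrancl.rtrancl_into_rtrancl)
    then have "(u,x) \<in> (adj ends A)\<^sup>*" using in_comp[of u x ends B e] uv(1) unfolding A_def by blast
    then show "\<exists>z\<in>ends e. (z,x) \<in> R" using split_e[of u x ends A e] uv(1) unfolding R_def by blast
  qed
  have kc: "(A, kernel_edges ends A) \<in> (leaf_del ends)\<^sup>*" by (rule kernel_char[OF Af(1)])
  have e7: "e \<notin> kernel_edges ends A" using assms(7) by (simp add: A_def)
  have Ane: "\<forall>g\<in>A. ends g \<noteq> {}" using Af(3) by blast
  obtain p q where pq: "ends e = {p,q}" "p \<noteq> q" "(p,q) \<notin> R"
    and trO: "is_tree ends {x. (p,x) \<in> R} (edges_in ends (A - {e}) {x. (p,x) \<in> R})"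
    using pend_inv[OF kc Ane eA e7] unfolding R_def by blast
  define Out where "Out = {x \<in> VA. (p,x) \<in> R}"
  define Rest where "Rest = {x \<in> VA. (q,x) \<in> R}"
  have pVA: "p \<in> VA" "q \<in> VA" using eVA pq by auto
  have Rsym: "\<And>x y. (x,y) \<in> R \<Longrightarrow> (y,x) \<in> R" unfolding R_def by (rule rtr_sym)
  have Rtr: "\<And>x y z. (x,y) \<in> R \<Longrightarrow> (y,z) \<in> R \<Longrightarrow> (x,z) \<in> R" unfolding R_def by (rule rtrancl_trans)
  have vAe: "verts ends (A - {e}) \<subseteq> VA" unfolding VA_def by (rule verts_mono) auto
  have RVA: "\<And>x y. (x,y) \<in> R \<Longrightarrow> x \<in> VA \<Longrightarrow> y \<in> VA"
  proof -
    fix x y assume xy: "(x,y) \<in> R" "x \<in> VA"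
    then have "y = x \<or> y \<in> verts ends (A - {e})" using rtr_verts unfolding R_def by metis
    then show "y \<in> VA" using xy(2) vAe by blast
  qed
  have OutEq: "{x. (p,x) \<in> R} = Out" using RVA pVA by (auto simp: Out_def)
  have trOut: "is_tree ends Out (edges_in ends (A - {e}) Out)" using trO unfolding OutEq .
  have qOut: "q \<notin> Out" using pq by (simp add: Out_def)
  have qRest: "q \<in> Rest" "p \<in> Out" using pVA by (auto simp: Rest_def Out_def R_def)
  have disj: "Out \<inter> Rest = {}"
  proof (rule ccontr)
    assume "Out \<inter> Rest \<noteq> {}"
    then obtain x where x: "(p,x) \<in> R" "(q,x) \<in> R" by (auto simp: Out_def Rest_def)
    have "(p,q) \<in> R" using Rtr[OF x(1) Rsym[OF x(2)]] .
    then show False using pq by blast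
  qed
  have cover: "VA = Out \<union> Rest"
  proof
    show "VA \<subseteq> Out \<union> Rest"
    proof
      fix x assume x: "x \<in> VA"
      then obtain z where "z \<in> ends e" "(z,x) \<in> R" using reach by blast
      then show "x \<in> Out \<union> Rest" using x pq by (auto simp: Out_def Rest_def)
    qed
    show "Out \<union> Rest \<subseteq> VA" by (auto simp: Out_def Rest_def)
  qed
  have img: "\<And>x. x \<in> VA \<Longrightarrow> (R \<inter> VA \<times> VA) `` {x} = {y \<in> VA. (x,y) \<in> R}" by auto
  have clsO: "\<And>x. x \<in> Out \<Longrightarrow> {y \<in> VA. (x,y) \<in> R} = Out"
  proof -
    fix x assume "x \<in> Out"
    then have px: "(p,x) \<in> R" by (simp add: Out_def)
    show "{y \<in> VA. (x,y) \<in> R} = Out"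
    proof
      show "{y \<in> VA. (x,y) \<in> R} \<subseteq> Out"
      proof
        fix y assume "y \<in> {y \<in> VA. (x,y) \<in> R}"
        then have y: "y \<in> VA" "(x,y) \<in> R" by auto
        then show "y \<in> Out" using Rtr[OF px y(2)] by (simp add: Out_def)
      qed
      show "Out \<subseteq> {y \<in> VA. (x,y) \<in> R}"
      proof
        fix y assume "y \<in> Out"
        then have y: "y \<in> VA" "(p,y) \<in> R" by (auto simp: Out_def)
        then show "y \<in> {y \<in> VA. (x,y) \<in> R}" using Rtr[OF Rsym[OF px] y(2)] by simp
      qed
    qed
  qed
  have clsR: "\<And>x. x \<in> Rest \<Longrightarrow> {y \<in> VA. (x,y) \<in> R} = Rest"
  proof -
    fix x assume "x \<in> Rest"
    then have px: "(q,x) \<in> R" by (simp add: Rest_def)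
    show "{y \<in> VA. (x,y) \<in> R} = Rest"
    proof
      show "{y \<in> VA. (x,y) \<in> R} \<subseteq> Rest"
      proof
        fix y assume "y \<in> {y \<in> VA. (x,y) \<in> R}"
        then have y: "y \<in> VA" "(x,y) \<in> R" by auto
        then show "y \<in> Rest" using Rtr[OF px y(2)] by (simp add: Rest_def)
      qed
      show "Rest \<subseteq> {y \<in> VA. (x,y) \<in> R}"
      proof
        fix y assume "y \<in> Rest"
        then have y: "y \<in> VA" "(q,y) \<in> R" by (auto simp: Rest_def)
        then show "y \<in> {y \<in> VA. (x,y) \<in> R}" using Rtr[OF Rsym[OF px] y(2)] by simp
      qed
    qed
  qed
  have comps: "components ends VA (A - {e}) = {Out, Rest}"
  proof -
    have c: "components ends VA (A - {e}) = (\<Union>x\<in>VA. {(R \<inter> VA \<times> VA) `` {x}})"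
      by (simp add: components_def quotient_def R_def)
    show ?thesis
    proof
      show "components ends VA (A - {e}) \<subseteq> {Out, Rest}"
      proof
        fix X assume "X \<in> components ends VA (A - {e})"
        then obtain x where x: "x \<in> VA" "X = (R \<inter> VA \<times> VA) `` {x}" using c by blast
        have "x \<in> Out \<or> x \<in> Rest" using x(1) cover by blast
        then show "X \<in> {Out, Rest}" using x img clsO clsR by auto
      qed
      have "Out \<in> components ends VA (A - {e})"
        using c img[OF pVA(1)] clsO[OF qRest(2)] pVA(1) by blast
      moreover have "Rest \<in> components ends VA (A - {e})"
        using c img[OF pVA(2)] clsR[OF qRest(1)] pVA(2) by blast
      ultimately show "{Out, Rest} \<subseteq> components ends VA (A - {e})" by blast
    qed
  qed
  have OR: "Out \<noteq> Rest" using qOut qRest by blast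
  have card2: "card {Out, Rest} = 2" using OR by simp
  have clo: "\<And>g x y. g \<in> A - {e} \<Longrightarrow> x \<in> ends g \<Longrightarrow> y \<in> ends g \<Longrightarrow> (x,y) \<in> R"
    unfolding R_def by (auto intro!: r_into_rtrancl adj_in)
  define ETo where "ETo = edges_in ends (A - {e}) Out"
  define ETr where "ETr = edges_in ends (A - {e}) Rest"
  have OVA: "Out \<subseteq> VA" "Rest \<subseteq> VA" using cover by auto
  have goodT: "\<And>T. T \<subseteq> VA \<Longrightarrow> is_tree ends T (edges_in ends (A - {e}) T) \<Longrightarrow> good ends T (edges_in ends (A - {e}) T)"
  proof -
    fix T assume T: "T \<subseteq> VA" "is_tree ends T (edges_in ends (A - {e}) T)"
    have fT: "finite T" using T(1) Af(2) finite_subset by blast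
    have sub: "edges_in ends (A - {e}) T \<subseteq> A" by (auto simp: edges_in_def)
    have fE: "finite (edges_in ends (A - {e}) T)" using sub Af(1) finite_subset by blast
    have en: "\<forall>g\<in>edges_in ends (A - {e}) T. ends g \<subseteq> T \<and> ends g \<noteq> {}"
      using sub Af(3) by (auto simp: edges_in_def)
    have "\<forall>S\<subseteq>edges_in ends (A - {e}) T. \<forall>t\<in>T. card S + 1 \<le> card (verts ends S \<union> {t})"
      using tree_count[OF T(2) fT fE en] by blast
    moreover have "verts ends (edges_in ends (A - {e}) T) \<subseteq> T" by (auto simp: verts_def edges_in_def)
    ultimately show "good ends T (edges_in ends (A - {e}) T)" by (simp add: good_def)
  qed
  have goodO: "good ends Out ETo" unfolding ETo_def by (rule goodT[OF OVA(1) trOut])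
  have closO: "\<And>f. f \<in> B \<Longrightarrow> f \<noteq> e \<Longrightarrow> ends f \<inter> Out \<noteq> {} \<Longrightarrow> f \<in> ETo"
  proof -
    fix f assume f: "f \<in> B" "f \<noteq> e" "ends f \<inter> Out \<noteq> {}"
    then have fA: "f \<in> A" using G1 OVA by blast
    obtain x where x: "x \<in> ends f" "x \<in> Out" using f by blast
    have "ends f \<subseteq> Out"
    proof
      fix y assume y: "y \<in> ends f"
      have "(x,y) \<in> R" using clo[of f x y] fA f(2) x y by blast
      moreover have "(p,x) \<in> R" "x \<in> VA" using x(2) by (auto simp: Out_def)
      ultimately show "y \<in> Out" using Rtr[of p x y] RVA[of x y] by (simp add: Out_def)
    qed
    then show "f \<in> ETo" using fA f(2) by (simp add: ETo_def edges_in_def)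
  qed
  have notRest: "\<not> is_tree ends Rest ETr"
  proof
    assume trR: "is_tree ends Rest ETr"
    have goodR: "good ends Rest ETr" unfolding ETr_def by (rule goodT[OF OVA(2) trR[unfolded ETr_def]])
    have Asplit: "A = insert e (ETo \<union> ETr)"
    proof
      show "insert e (ETo \<union> ETr) \<subseteq> A" using eA by (auto simp: ETo_def ETr_def edges_in_def)
      show "A \<subseteq> insert e (ETo \<union> ETr)"
      proof
        fix g assume g: "g \<in> A"
        show "g \<in> insert e (ETo \<union> ETr)"
        proof (cases "g = e")
          case True then show ?thesis by simp
        next
          case False
          then have gA: "g \<in> A - {e}" using g by blast
          obtain x where x: "x \<in> ends g" using Af(3) g by blast
          have xVA: "x \<in> VA" using g x by (auto simp: VA_def verts_def)
          have xy: "\<And>y. y \<in> ends g \<Longrightarrow> (x,y) \<in> R" using clo gA x by blast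
          have yVA: "\<And>y. y \<in> ends g \<Longrightarrow> y \<in> VA" using g by (auto simp: VA_def verts_def)
          have "x \<in> Out \<or> x \<in> Rest" using xVA cover by blast
          then show ?thesis
          proof
            assume "x \<in> Out"
            then have "(p,x) \<in> R" by (simp add: Out_def)
            then have "ends g \<subseteq> Out" using xy yVA Rtr[of p x] by (auto simp: Out_def)
            then show ?thesis using gA by (simp add: ETo_def edges_in_def)
          next
            assume "x \<in> Rest"
            then have "(q,x) \<in> R" by (simp add: Rest_def)
            then have "ends g \<subseteq> Rest" using xy yVA Rtr[of q x] by (auto simp: Rest_def)
            then show ?thesis using gA by (simp add: ETr_def edges_in_def)
          qed
        qed
      qed
    qed
    have finETo: "finite ETo" "finite ETr" using Af(1) by (auto simp: ETo_def ETr_def edges_in_def)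
    have en: "\<forall>f\<in>insert e (ETo \<union> ETr). finite (ends f) \<and> ends f \<noteq> {}" using Af(3) Asplit by simp
    have eOR: "ends e \<subseteq> Out \<union> Rest" using eVA cover by simp
    have "good ends (Out \<union> Rest) (insert e (ETo \<union> ETr))"
      by (rule good_combine[OF goodO goodR disj _ qRest(2) _ qRest(1) eOR finETo en]) (use pq in auto)
    then have goodA: "good ends VA A" using cover Asplit by simp
    have allA: "\<forall>f\<in>E. ends f \<inter> VA \<noteq> {} \<longrightarrow> f \<in> A"
    proof (intro ballI impI)
      fix f assume f: "f \<in> E" "ends f \<inter> VA \<noteq> {}"
      show "f \<in> A"
      proof (cases "f \<in> B")
        case True then show ?thesis using G1 f by blast
      next
        case False
        have IF: "\<forall>f\<in>B. ends f \<inter> VA \<noteq> {} \<longrightarrow> f \<in> A" using G1 by blast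
        have "Mk_indep ends E k (insert f B)" by (rule aug[OF G k BI goodA IF f(1) False f(2)])
        then show ?thesis using Bnot False by blast
      qed
    qed
    obtain C where C: "Mk_circuit ends E k C" "e \<in> C"
      using assms(4) eBE unfolding Mk_connected_def by blast
    show False by (rule no_circ[OF G k goodA allA C(1) C(2) eA])
  qed
  have treeT: "\<And>T. T \<in> {Out, Rest} \<Longrightarrow> is_tree ends T (edges_in ends (A - {e}) T) \<Longrightarrow> T = Out"
    using notRest unfolding ETr_def by blast
  define X where "X = {e} \<union> {u \<in> E - B. ends u \<inter> Out \<noteq> {}}"
  have fund: "fund_cocircuit ends E k e B = X"
  proof (rule fund_eq[OF assms(5) assms(6)])
    show "X \<subseteq> E" using eBE by (auto simp: X_def)
    show "e \<in> X" by (simp add: X_def)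
    show "X \<inter> B = {e}" using assms(6) by (auto simp: X_def)
    have I': "Mk_indep ends E k (B - {e})" using BI by (auto simp: Mk_indep_def)
    show "\<forall>u\<in>X - {e}. Mk_base ends E k (insert u (B - {e}))"
    proof
      fix u assume u: "u \<in> X - {e}"
      then have uE: "u \<in> E" "u \<notin> B" "ends u \<inter> Out \<noteq> {}" by (auto simp: X_def)
      have IF: "\<forall>f\<in>B - {e}. ends f \<inter> Out \<noteq> {} \<longrightarrow> f \<in> ETo" using closO by blast
      have uB: "u \<notin> B - {e}" using uE by blast
      have "Mk_indep ends E k (insert u (B - {e}))" by (rule aug[OF G k I' goodO IF uE(1) uB uE(3)])
      then show "Mk_base ends E k (insert u (B - {e}))"
        by (rule base_exchange[OF assms(3) assms(5) assms(6) uE(1) uE(2)])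
    qed
    show "\<forall>B'. Mk_base ends E k B' \<longrightarrow> X \<inter> B' \<noteq> {}"
    proof (intro allI impI)
      fix B' assume B': "Mk_base ends E k B'"
      show "X \<inter> B' \<noteq> {}"
      proof
        assume XB': "X \<inter> B' = {}"
        have B'I: "Mk_indep ends E k B'" and B'max: "\<forall>I. Mk_indep ends E k I \<and> B' \<subseteq> I \<longrightarrow> I = B'"
          using B' by (auto simp: Mk_base_def)
        have B'E: "B' \<subseteq> E" using B'I by (simp add: Mk_indep_def)
        have eB': "e \<notin> B'" using XB' by (auto simp: X_def)
        have IF: "\<forall>f\<in>B'. ends f \<inter> Out \<noteq> {} \<longrightarrow> f \<in> ETo"
        proof (intro ballI impI)
          fix f assume f: "f \<in> B'" "ends f \<inter> Out \<noteq> {}"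
          show "f \<in> ETo"
          proof (cases "f \<in> B")
            case True
            moreover have "f \<noteq> e" using f eB' by blast
            ultimately show ?thesis using closO f by blast
          next
            case False
            then have "f \<in> X" using f B'E by (auto simp: X_def)
            then show ?thesis using XB' f by blast
          qed
        qed
        have eO: "ends e \<inter> Out \<noteq> {}" using pq qRest(2) by blast
        have "Mk_indep ends E k (insert e B')" by (rule aug[OF G k B'I goodO IF eBE eB' eO])
        then show False using B'max eB' by blast
      qed
    qed
  qed
  show ?thesis
    unfolding Let_def A_def[symmetric] VA_def[symmetric] comps
  proof (intro conjI)
    show "card {Out, Rest} = 2" by (rule card2)
    show "\<exists>!T. T \<in> {Out, Rest} \<and> is_tree ends T (edges_in ends (A - {e}) T)"
      using trOut treeT by blast
    show "\<forall>T. T \<in> {Out, Rest} \<and> is_tree ends T (edges_in ends (A - {e}) T) \<longrightarrow>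
          fund_cocircuit ends E k e B = {e} \<union> {u \<in> E - B. ends u \<inter> T \<noteq> {}}"
      using treeT fund X_def by blast
  qed
qed


end
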